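(* Assume (FWW) for a flow $\Phi_t$ on $\mathbb{R}^n$ and a $k$-cone $C$. Let $K\subset\mathbb{R}^n$ be a compact invariant set and let $\mathbb{R}^n=E_y\oplus F_y$, $y\in K$, be a $k$-exponential separation of $(\Phi_t,D\Phi_t)$ along $K$ associated with $C$. Then there exists a constant $\delta'>0$ such that $$\{v\in\mathbb{R}^n:\ d(v,E_y\cap S)\le\delta'\}\subset \operatorname{Int}C\quad\text{for every }y\in K,$$ where $S=\{v\in\mathbb{R}^n:\|v\|=1\}$ and $d(v,B)=\inf_{w\in B}\|v-w\|$.
   Context: A closed set $C\subset\mathbb{R}^n$ is a $k$-cone if $lv\in C$ for all $v\in C$, $l\in\mathbb{R}$, and the maximal dimension of a linear subspace contained in $C$ is $k$. $C$ is $k$-solid if there is a $k$-dimensional subspace $W$ with $W\setminus\{0\}\subset\operatorname{Int}C$. Write $x\sim y$ if $x-y\in C$ and $x\approx y$ if $x-y\in\operatorname{Int}C$. A flow $\Phi_t$ is strongly monotone with respect to a $k$-solid cone $C$ if $x\sim y$ implies $\Phi_t(x)\sim\Phi_t(y)$ for $t\ge0$, and $x\ne y$, $x\sim y$ imply $\Phi_t(x)\approx\Phi_t(y)$ for $t>0$. Assumption (FWW): the flow $\Phi_t$ on $\mathbb{R}^n$ is $C^{1,\alpha}$-smooth (the map $(t,x)\mapsto\Phi_t(x)$ is $C^1$ with locally $\alpha$-Hölder derivative, $\alpha\in(0,1]$), strongly monotone with respect to the $k$-cone $C$, and $D_x\Phi_t(C\setminus\{0\})\subset\operatorname{Int}C$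 for all $t>0$ and $x$. A $k$-exponential separation along a compact invariant set $K$ associated with $C$ consists of a continuous (in the Grassmannian gap metric) family of $k$-dimensional subspaces $E_x$ and a continuous family of $(n-k)$-dimensional subspaces $F_x$, $x\in K$, such that: $\mathbb{R}^n=E_x\oplus F_x$; $D_x\Phi_tE_x=E_{\Phi_t(x)}$ and $D_x\Phi_tF_x\subset F_{\Phi_t(x)}$ for $t>0$; there are $M>0$, $0<\gamma<1$ with $\|D_x\Phi_tw\|\le M\gamma^t\|D_x\Phi_tv\|$ for all $x\in K$, unit $w\in F_x$, unit $v\in E_x$, $t\ge0$; and $E_x\subset\operatorname{Int}C\cup\{0\}$, $F_x\cap C=\{0\}$ for all $x\in K$. *)

theory Defs
  imports "HOL-Analysis.Analysis"
begin

text \<open>Ambient space: a Euclidean space 'a (isomorphic to R^n with n = DIM('a)).\<close>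

definition is_flow :: "(real \<Rightarrow> 'a \<Rightarrow> 'a) \<Rightarrow> bool" where
  "is_flow \<Phi> \<longleftrightarrow> (\<forall>x. \<Phi> 0 x = x) \<and> (\<forall>s t x. \<Phi> (s + t) x = \<Phi> s (\<Phi> t x))"

definition C1_alpha :: "(real \<Rightarrow> 'a::euclidean_space \<Rightarrow> 'a) \<Rightarrow> real \<Rightarrow> bool" where
  "C1_alpha \<Phi> \<alpha> \<longleftrightarrow> 0 < \<alpha> \<and> \<alpha> \<le> 1 \<and>
     (\<exists>D :: real \<times> 'a \<Rightarrow> (real \<times> 'a) \<Rightarrow>\<^sub>L 'a.
        (\<forall>p. ((\<lambda>(t, x). \<Phi> t x) has_derivative blinfun_apply (D p)) (at p)) \<and>
        continuous_on UNIV D \<and>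
        (\<forall>p. \<exists>r>0. \<exists>L. \<forall>q\<in>ball p r. \<forall>q'\<in>ball p r.
              norm (D q - D q') \<le> L * dist q q' powr \<alpha>))"

definition Dx :: "(real \<Rightarrow> 'a::real_normed_vector \<Rightarrow> 'a) \<Rightarrow> real \<Rightarrow> 'a \<Rightarrow> 'a \<Rightarrow> 'a" where
  "Dx \<Phi> t x = frechet_derivative (\<Phi> t) (at x)"

definition k_cone :: "nat \<Rightarrow> 'a::euclidean_space set \<Rightarrow> bool" where
  "k_cone k C \<longleftrightarrow> closed C \<and> (\<forall>v\<in>C. \<forall>l::real. l *\<^sub>R v \<in> C) \<and>
     (\<exists>W. subspace W \<and> W \<subseteq> C \<and> dim W = k) \<and>
     (\<forall>W. subspace W \<and> W \<subseteq> C \<longrightarrow> dim W \<le> k)"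

definition k_solid :: "nat \<Rightarrow> 'a::euclidean_space set \<Rightarrow> bool" where
  "k_solid k C \<longleftrightarrow> (\<exists>W. subspace W \<and> dim W = k \<and> W - {0} \<subseteq> interior C)"

definition strongly_monotone :: "(real \<Rightarrow> 'a::euclidean_space \<Rightarrow> 'a) \<Rightarrow> 'a set \<Rightarrow> bool" where
  "strongly_monotone \<Phi> C \<longleftrightarrow>
     (\<forall>x y t. x - y \<in> C \<and> t \<ge> 0 \<longrightarrow> \<Phi> t x - \<Phi> t y \<in> C) \<and>
     (\<forall>x y t. x \<noteq> y \<and> x - y \<in> C \<and> t > 0 \<longrightarrow> \<Phi> t x - \<Phi> t y \<in> interior C)"

text \<open>Assumption (FWW) with respect to a k-cone C (strong monotonicity presupposes
  that C is k-solid).\<close>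
definition FWW :: "(real \<Rightarrow> 'a::euclidean_space \<Rightarrow> 'a) \<Rightarrow> real \<Rightarrow> nat \<Rightarrow> 'a set \<Rightarrow> bool" where
  "FWW \<Phi> \<alpha> k C \<longleftrightarrow> is_flow \<Phi> \<and> C1_alpha \<Phi> \<alpha> \<and> k_cone k C \<and> k_solid k C \<and>
     strongly_monotone \<Phi> C \<and>
     (\<forall>t x. t > 0 \<longrightarrow> Dx \<Phi> t x ` (C - {0}) \<subseteq> interior C)"

definition half_gap :: "'a::real_normed_vector set \<Rightarrow> 'a set \<Rightarrow> real" where
  "half_gap U V = (if U \<inter> sphere 0 1 = {} then 0 else SUP u \<in> U \<inter> sphere 0 1. infdist u V)"

definition gap_dist :: "'a::real_normed_vector set \<Rightarrow> 'a set \<Rightarrow> real" where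
  "gap_dist U V = max (half_gap U V) (half_gap V U)"

definition gap_continuous_on :: "'a::metric_space set \<Rightarrow> ('a \<Rightarrow> 'b::real_normed_vector set) \<Rightarrow> bool" where
  "gap_continuous_on K E \<longleftrightarrow>
     (\<forall>y\<in>K. \<forall>e>0. \<exists>d>0. \<forall>z\<in>K. dist z y < d \<longrightarrow> gap_dist (E z) (E y) < e)"

definition invariant_set :: "(real \<Rightarrow> 'a \<Rightarrow> 'a) \<Rightarrow> 'a set \<Rightarrow> bool" where
  "invariant_set \<Phi> K \<longleftrightarrow> (\<forall>t. \<Phi> t ` K = K)"

definition exp_separation ::
  "(real \<Rightarrow> 'a::euclidean_space \<Rightarrow> 'a) \<Rightarrow> nat \<Rightarrow> 'a set \<Rightarrow> 'a set \<Rightarrow> ('a \<Rightarrow> 'a set) \<Rightarrow> ('a \<Rightarrow> 'a set) \<Rightarrow> bool" where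
  "exp_separation \<Phi> k C K E F \<longleftrightarrow>
     (\<forall>x\<in>K. subspace (E x) \<and> dim (E x) = k \<and> subspace (F x) \<and> dim (F x) = DIM('a) - k) \<and>
     gap_continuous_on K E \<and> gap_continuous_on K F \<and>
     (\<forall>x\<in>K. E x \<inter> F x = {0} \<and> {u + w | u w. u \<in> E x \<and> w \<in> F x} = UNIV) \<and>
     (\<forall>x\<in>K. \<forall>t>0. Dx \<Phi> t x ` E x = E (\<Phi> t x) \<and> Dx \<Phi> t x ` F x \<subseteq> F (\<Phi> t x)) \<and>
     (\<exists>M>0. \<exists>\<gamma>. 0 < \<gamma> \<and> \<gamma> < 1 \<and>
        (\<forall>x\<in>K. \<forall>w\<in>F x. \<forall>v\<in>E x. \<forall>t\<ge>0. norm w = 1 \<and> norm v = 1 \<longrightarrow>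
           norm (Dx \<Phi> t x w) \<le> M * \<gamma> powr t * norm (Dx \<Phi> t x v))) \<and>
     (\<forall>x\<in>K. E x \<subseteq> interior C \<union> {0} \<and> F x \<inter> C = {0})"

end

theory Submission
  imports Defs
begin

lemma half_gap_bound:
  fixes U V :: "'a::real_normed_vector set"
  assumes "u \<in> U" "norm u = 1" "0 \<in> V"
  shows "infdist u V \<le> half_gap U V"
proof -
  have uS: "u \<in> U \<inter> sphere 0 1" using assms by auto
  have "bdd_above ((\<lambda>u. infdist u V) ` (U \<inter> sphere 0 1))"
  proof (rule bdd_aboveI2[where M=1])
    fix x assume "x \<in> U \<inter> sphere 0 1"
    then show "infdist x V \<le> 1" using infdist_le[OF assms(3), of x] by auto
  qed
  then have "infdist u V \<le> (SUP u \<in> U \<inter> sphere 0 1. infdist u V)"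
    using uS by (rule cSUP_upper2) simp
  then show ?thesis using uS unfolding half_gap_def by auto
qed

theorem lemma3p3:
  fixes \<Phi> :: "real \<Rightarrow> 'a::euclidean_space \<Rightarrow> 'a"
    and \<alpha> :: real and k :: nat and C K :: "'a set" and E F :: "'a \<Rightarrow> 'a set"
  assumes "FWW \<Phi> \<alpha> k C"
    and "compact K" and "invariant_set \<Phi> K"
    and "exp_separation \<Phi> k C K E F"
  shows "\<exists>\<delta>'>0. \<forall>y\<in>K.
           {v. E y \<inter> sphere 0 1 \<noteq> {} \<and> infdist v (E y \<inter> sphere 0 1) \<le> \<delta>'} \<subseteq> interior C"
proof -
  have sub: "\<And>x. x \<in> K \<Longrightarrow> subspace (E x)"
    and gc: "gap_continuous_on K E"
    and inC: "\<And>x. x \<in> K \<Longrightarrow> E x \<subseteq> interior C \<union> {0}"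
    using assms(4) unfolding exp_separation_def by auto
  define U where "U = (\<Union>y\<in>K. E y \<inter> sphere 0 1)"
  have UC: "U \<subseteq> interior C" using inC unfolding U_def by fastforce
  have "closed U"
    unfolding closed_sequential_limits
  proof (intro allI impI)
    fix x l assume H: "(\<forall>n. x n \<in> U) \<and> x \<longlonglongrightarrow> l"
    then obtain y where y: "\<And>n. y n \<in> K" "\<And>n. x n \<in> E (y n)" "\<And>n. norm (x n) = 1"
      unfolding U_def by simp metis
    obtain z r where z: "z \<in> K" "strict_mono r" "(y \<circ> r) \<longlonglongrightarrow> z"
      using seq_compactE[OF compact_imp_seq_compact[OF assms(2)], of y] y(1) by blast
    have xr: "(x \<circ> r) \<longlonglongrightarrow> l" using H z(2) LIMSEQ_subseq_LIMSEQ by blast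
    have nl: "norm l = 1"
      using tendsto_norm[OF conjunct2[OF H]] y(3) by (simp add: LIMSEQ_const_iff)
    have "infdist l (E z) \<le> 2 * e" if e: "e > 0" for e
    proof -
      obtain d where d: "d > 0" "\<And>w. w \<in> K \<Longrightarrow> dist w z < d \<Longrightarrow> gap_dist (E w) (E z) < e"
        using gc e z(1) unfolding gap_continuous_on_def by metis
      obtain N1 where N1: "\<And>n. n \<ge> N1 \<Longrightarrow> dist ((y \<circ> r) n) z < d"
        using z(3) d(1) unfolding LIMSEQ_def by blast
      obtain N2 where N2: "\<And>n. n \<ge> N2 \<Longrightarrow> dist ((x \<circ> r) n) l < e"
        using xr e unfolding LIMSEQ_def by blast
      define n where "n = max N1 N2"
      have g: "gap_dist (E (y (r n))) (E z) < e" using d(2)[OF y(1)] N1[of n] by (simp add: n_def)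
      have "infdist (x (r n)) (E z) \<le> half_gap (E (y (r n))) (E z)"
        by (rule half_gap_bound[OF y(2) y(3)]) (use sub[OF z(1)] subspace_0 in blast)
      also have "\<dots> \<le> gap_dist (E (y (r n))) (E z)" unfolding gap_dist_def by simp
      finally have a: "infdist (x (r n)) (E z) < e" using g by simp
      have b: "dist (x (r n)) l < e" using N2[of n] by (simp add: n_def)
      show ?thesis using infdist_triangle[of l "E z" "x (r n)"] a b by (simp add: dist_commute)
    qed
    then have "infdist l (E z) \<le> 0"
    proof -
      assume h: "\<And>e. e > 0 \<Longrightarrow> infdist l (E z) \<le> 2 * e"
      show ?thesis
      proof (rule ccontr)
        assume "\<not> infdist l (E z) \<le> 0"
        then have p: "infdist l (E z) > 0" by simp
        have "infdist l (E z) \<le> 2 * (infdist l (E z) / 4)" using h[of "infdist l (E z) / 4"] p by linarith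
        then show False using p by simp
      qed
    qed
    then have "infdist l (E z) = 0" using infdist_nonneg antisym by blast
    moreover have "closed (E z)" using closed_subspace sub[OF z(1)] by blast
    moreover have "E z \<noteq> {}" using sub[OF z(1)] subspace_0 by blast
    ultimately have "l \<in> E z" using in_closure_iff_infdist_zero by (metis closure_closed)
    then show "l \<in> U" unfolding U_def using z(1) nl by auto
  qed
  moreover have "bounded U" unfolding U_def
    by (rule bounded_subset[OF bounded_sphere[of 0 1]]) auto
  ultimately have "compact U" using compact_eq_bounded_closed by blast
  then obtain e where e: "e > 0" "(\<Union>x\<in>U. ball x e) \<subseteq> interior C"
    using compact_subset_open_imp_ball_epsilon_subset[OF _ open_interior UC] by blast
  show ?thesis
  proof (intro exI[of _ "e/2"] conjI ballI subsetI)
    show "e/2 > 0" using e by simp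
    fix y v assume y: "y \<in> K" and v: "v \<in> {v. E y \<inter> sphere 0 1 \<noteq> {} \<and> infdist v (E y \<inter> sphere 0 1) \<le> e/2}"
    then have ne: "E y \<inter> sphere 0 1 \<noteq> {}" and le: "infdist v (E y \<inter> sphere 0 1) < e"
      using e by auto
    have "(INF a\<in>E y \<inter> sphere 0 1. dist v a) < e" using le infdist_notempty[OF ne] by simp
    then obtain w where w: "w \<in> E y \<inter> sphere 0 1" "dist v w < e"
      using ne by (metis cINF_less_iff bdd_below_image_dist)
    have "w \<in> U" using w y unfolding U_def by auto
    moreover have "v \<in> ball w e" using w(2) by (simp add: dist_commute)
    ultimately show "v \<in> interior C" using e(2) by blast
  qed
qed

end
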